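(* Let $n\ge 1$ and $\psi,\eta\in(0,1)^n$. Let $Y\in\{0,1\}$ be a random bit with $\mathbb{P}(Y=1)=\mathbb{P}(Y=0)=1/2$, and conditionally on $Y$ let $X_1,\ldots,X_n\in\{0,1\}$ be independent with $\mathbb{P}(X_i=1\mid Y=1)=\psi_i$ and $\mathbb{P}(X_i=0\mid Y=0)=\eta_i$. Let $f^{\mathrm{OPT}}:\{0,1\}^n\to\{0,1\}$ be a decision rule minimizing $\mathbb{P}(f(X)\neq Y)$ over all $f:\{0,1\}^n\to\{0,1\}$, where $X=(X_1,\ldots,X_n)$. Let $\pi_i=(\psi_i+\eta_i)/2$ and $\gamma_i=\log\frac{\pi_i}{1-\pi_i}$. Then $$\mathbb{P}(f^{\mathrm{OPT}}(X)\neq Y)\ge\frac12\cdot 2^n\sqrt{\prod_{i=1}^n\pi_i(1-\pi_i)}\cdot\exp\Big(-\frac12\sum_{i=1}^n|\gamma_i|\Big).$$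
   Context: $\pi_i$ is the balanced accuracy of expert $i$; $\psi_i$ is its sensitivity and $\eta_i$ its specificity. *)

theory Defs
  imports Complex_Main "HOL-Library.FuncSet"
begin

text \<open>Bits are modelled as bool (True = 1). A point of {0,1}^n is a function
  x :: nat => bool restricted to {..<n} (extensional: x i = undefined outside).\<close>

definition cube :: "nat \<Rightarrow> (nat \<Rightarrow> bool) set" where
  "cube n = PiE {..<n} (\<lambda>_. UNIV)"

text \<open>Joint probabilities P(Y = 1, X = x) and P(Y = 0, X = x) under the model:
  Y uniform, X_i conditionally independent given Y,
  P(X_i = 1 | Y = 1) = psi i, P(X_i = 0 | Y = 0) = eta i.\<close>

definition joint1 :: "nat \<Rightarrow> (nat \<Rightarrow> real) \<Rightarrow> (nat \<Rightarrow> bool) \<Rightarrow> real" where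
  "joint1 n psi x = (1/2) * (\<Prod>i<n. if x i then psi i else 1 - psi i)"

definition joint0 :: "nat \<Rightarrow> (nat \<Rightarrow> real) \<Rightarrow> (nat \<Rightarrow> bool) \<Rightarrow> real" where
  "joint0 n eta x = (1/2) * (\<Prod>i<n. if x i then 1 - eta i else eta i)"

definition err :: "nat \<Rightarrow> (nat \<Rightarrow> real) \<Rightarrow> (nat \<Rightarrow> real) \<Rightarrow> ((nat \<Rightarrow> bool) \<Rightarrow> bool) \<Rightarrow> real" where
  "err n psi eta f =
     (\<Sum>x\<in>cube n. (if f x then 0 else joint1 n psi x) + (if f x then joint0 n eta x else 0))"

end

theory Submission
  imports Defs
begin

lemma sqrt_prod_lt: fixes n :: nat shows "(\<And>i. i < n \<Longrightarrow> 0 \<le> f i) \<Longrightarrow> sqrt (\<Prod>i<n. f i) = (\<Prod>i<n. sqrt (f i))"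
  by (induction n) (auto simp: real_sqrt_mult)

lemma factor_eq:
  fixes p :: real
  assumes "0 < p" "p < 1"
  shows "2 * sqrt (p * (1 - p)) * exp (-(1/2) * \<bar>ln (p / (1 - p))\<bar>) = 2 * min p (1 - p)"
proof -
  have e: "exp (ln x / 2) = sqrt x" if "x > 0" for x :: real
    using that powr_half_sqrt[of x] by (simp add: powr_def)
  show ?thesis
  proof (cases "p \<ge> 1 - p")
    case True
    have "\<bar>ln (p / (1 - p))\<bar> = - ln ((1 - p) / p)"
      using assms True by (simp add: ln_div)
    hence "exp (-(1/2) * \<bar>ln (p / (1 - p))\<bar>) = sqrt ((1 - p) / p)"
      using e[of "(1-p)/p"] assms by simp
    hence "2 * sqrt (p * (1 - p)) * exp (-(1/2) * \<bar>ln (p / (1 - p))\<bar>)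
        = 2 * sqrt ((p * (1 - p)) * ((1 - p) / p))" by (simp only: real_sqrt_mult)
    also have "(p * (1 - p)) * ((1 - p) / p) = (1 - p)^2" using assms by (simp add: power2_eq_square)
    finally show ?thesis using True assms by simp
  next
    case False
    have "\<bar>ln (p / (1 - p))\<bar> = ln ((1 - p) / p)"
      using assms False by (simp add: ln_div)
    moreover have "-(1/2) * ln ((1 - p) / p) = ln (p / (1 - p)) / 2"
      using assms by (simp add: ln_div algebra_simps)
    ultimately have "exp (-(1/2) * \<bar>ln (p / (1 - p))\<bar>) = sqrt (p / (1 - p))"
      using e[of "p/(1-p)"] assms by (simp only:) simp
    hence "2 * sqrt (p * (1 - p)) * exp (-(1/2) * \<bar>ln (p / (1 - p))\<bar>)
        = 2 * sqrt ((p * (1 - p)) * (p / (1 - p)))" by (simp only: real_sqrt_mult)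
    also have "(p * (1 - p)) * (p / (1 - p)) = p^2" using assms by (simp add: power2_eq_square)
    finally show ?thesis using False assms by simp
  qed
qed

theorem theorem3:
  fixes n :: nat and psi eta :: "nat \<Rightarrow> real" and fopt :: "(nat \<Rightarrow> bool) \<Rightarrow> bool"
  assumes "n \<ge> 1"
    and "\<And>i. i < n \<Longrightarrow> 0 < psi i \<and> psi i < 1"
    and "\<And>i. i < n \<Longrightarrow> 0 < eta i \<and> eta i < 1"
    and "\<And>g. err n psi eta fopt \<le> err n psi eta g"
  shows "let pi = (\<lambda>i. (psi i + eta i) / 2);
             gamma = (\<lambda>i. ln (pi i / (1 - pi i)))
         in err n psi eta fopt \<ge>
              (1/2) * 2 ^ n * sqrt (\<Prod>i<n. pi i * (1 - pi i))
                * exp (-(1/2) * (\<Sum>i<n. \<bar>gamma i\<bar>))"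
proof -
  define pi where "pi = (\<lambda>i. (psi i + eta i) / 2)"
  define a where "a = (\<lambda>i y. if y then psi i else 1 - psi i)"
  define b where "b = (\<lambda>i y. if y then 1 - eta i else eta i)"
  have pi01: "0 < pi i \<and> pi i < 1" if "i < n" for i
    using assms(2,3)[OF that] by (auto simp: pi_def)
  have a0: "0 \<le> a i y" "0 \<le> b i y" if "i < n" for i y
    using assms(2,3)[OF that] by (auto simp: a_def b_def)
  have sumi: "(\<Sum>y\<in>UNIV. min (a i y) (b i y)) = 2 * min (pi i) (1 - pi i)" if "i < n" for i
  proof -
    have "(\<Sum>y\<in>UNIV. min (a i y) (b i y)) = min (psi i) (1 - eta i) + min (1 - psi i) (eta i)"
      by (simp add: UNIV_bool a_def b_def)
    also have "\<dots> = 2 * min (pi i) (1 - pi i)" by (auto simp: pi_def min_def field_simps)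
    finally show ?thesis .
  qed
  have "err n psi eta fopt \<ge> (\<Sum>x\<in>cube n. min (joint1 n psi x) (joint0 n eta x))"
    unfolding err_def by (intro sum_mono) auto
  moreover have "min (joint1 n psi x) (joint0 n eta x) \<ge> (1/2) * (\<Prod>i<n. min (a i (x i)) (b i (x i)))" for x
  proof -
    have "(\<Prod>i<n. min (a i (x i)) (b i (x i))) \<le> (\<Prod>i<n. a i (x i))"
      by (intro prod_mono) (auto intro: a0)
    moreover have "(\<Prod>i<n. min (a i (x i)) (b i (x i))) \<le> (\<Prod>i<n. b i (x i))"
      by (intro prod_mono) (auto intro: a0)
    ultimately show ?thesis by (simp add: joint1_def joint0_def a_def b_def)
  qed
  hence "(\<Sum>x\<in>cube n. min (joint1 n psi x) (joint0 n eta x)) \<ge>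
       (\<Sum>x\<in>cube n. (1/2) * (\<Prod>i<n. min (a i (x i)) (b i (x i))))"
    by (intro sum_mono) auto
  moreover have "(\<Sum>x\<in>cube n. (1/2) * (\<Prod>i<n. min (a i (x i)) (b i (x i))))
      = (1/2) * (\<Prod>i<n. \<Sum>y\<in>UNIV. min (a i y) (b i y))"
    unfolding cube_def by (subst prod_sum_PiE) (auto simp: sum_distrib_left)
  moreover have "(\<Prod>i<n. \<Sum>y\<in>UNIV. min (a i y) (b i y)) = (\<Prod>i<n. 2 * min (pi i) (1 - pi i))"
    by (intro prod.cong) (auto simp: sumi)
  moreover have "(\<Prod>i<n. 2 * min (pi i) (1 - pi i)) =
      2 ^ n * sqrt (\<Prod>i<n. pi i * (1 - pi i)) * exp (-(1/2) * (\<Sum>i<n. \<bar>ln (pi i / (1 - pi i))\<bar>))"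
  proof -
    have "2 ^ n * sqrt (\<Prod>i<n. pi i * (1 - pi i)) * exp (-(1/2) * (\<Sum>i<n. \<bar>ln (pi i / (1 - pi i))\<bar>))
       = (\<Prod>i<n. 2) * (\<Prod>i<n. sqrt (pi i * (1 - pi i))) * (\<Prod>i<n. exp (-(1/2) * \<bar>ln (pi i / (1 - pi i))\<bar>))"
      using pi01 by (simp add: sqrt_prod_lt exp_sum sum_distrib_left less_imp_le)
    also have "\<dots> = (\<Prod>i<n. 2 * sqrt (pi i * (1 - pi i)) * exp (-(1/2) * \<bar>ln (pi i / (1 - pi i))\<bar>))"
      by (simp add: prod.distrib)
    also have "\<dots> = (\<Prod>i<n. 2 * min (pi i) (1 - pi i))"
      using pi01 factor_eq by (intro prod.cong) auto
    finally show ?thesis by simp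
  qed
  ultimately show ?thesis unfolding Let_def pi_def[symmetric] by simp
qed

end
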